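(* Let $\mathcal A$ be a unital $C^*$-algebra and $\mathcal F\subseteq\mathcal A$ an algebra of finite type elements. For every projection $p\in\mathcal F$ there is an approximate unit $(p_\alpha)$ for $\mathcal F$ consisting of projections such that $p\le p_\alpha$ for all $\alpha$.
   Context: Let $\mathcal A$ be a unital $C^*$-algebra. A subalgebra $\mathcal F\subseteq\mathcal A$ is an algebra of finite type elements if: (i) $\mathcal F$ is a self-adjoint two-sided ideal of $\mathcal A$; (ii) $\mathcal F$ has an approximate unit consisting of projections, i.e. a net $(p_\alpha)$ of projections in $\mathcal F$ with $\|f-p_\alpha f\|\to0$ and $\|f-fp_\alpha\|\to0$ for every $f\in\mathcal F$; (iii) for any projections $p,q\in\mathcal F$ there is $v\in\mathcal A$ with $vv^*=q$ and $v^*vp=0$. *)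

theory Defs
  imports "HOL-Analysis.Analysis"
begin

locale unital_cstar_algebra =
  fixes scaleC :: "complex \<Rightarrow> 'a::{real_normed_algebra_1, banach} \<Rightarrow> 'a"
    and star :: "'a \<Rightarrow> 'a"
  assumes scaleC_add_right: "scaleC c (x + y) = scaleC c x + scaleC c y"
    and scaleC_add_left: "scaleC (c + d) x = scaleC c x + scaleC d x"
    and scaleC_scaleC: "scaleC c (scaleC d x) = scaleC (c * d) x"
    and scaleC_one: "scaleC 1 x = x"
    and scaleC_of_real: "scaleC (complex_of_real r) x = scaleR r x"
    and norm_scaleC: "norm (scaleC c x) = norm c * norm x"
    and scaleC_mult_left: "scaleC c x * y = scaleC c (x * y)"
    and scaleC_mult_right: "x * scaleC c y = scaleC c (x * y)"
    and star_star: "star (star x) = x"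
    and star_add: "star (x + y) = star x + star y"
    and star_scaleC: "star (scaleC c x) = scaleC (cnj c) (star x)"
    and star_mult: "star (x * y) = star y * star x"
    and cstar_identity: "norm (star x * x) = norm x ^ 2"

definition is_projection :: "('a::ring \<Rightarrow> 'a) \<Rightarrow> 'a \<Rightarrow> bool" where
  "is_projection star p \<longleftrightarrow> p * p = p \<and> star p = p"

definition cstar_le :: "('a::ring \<Rightarrow> 'a) \<Rightarrow> 'a \<Rightarrow> 'a \<Rightarrow> bool" where
  "cstar_le star x y \<longleftrightarrow> (\<exists>z. y - x = star z * z)"

definition selfadjoint_ideal ::
  "(complex \<Rightarrow> 'a::ring \<Rightarrow> 'a) \<Rightarrow> ('a \<Rightarrow> 'a) \<Rightarrow> 'a set \<Rightarrow> bool" where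
  "selfadjoint_ideal scaleC star F \<longleftrightarrow>
     0 \<in> F \<and> (\<forall>x\<in>F. \<forall>y\<in>F. x + y \<in> F) \<and> (\<forall>c. \<forall>x\<in>F. scaleC c x \<in> F) \<and>
     (\<forall>a. \<forall>f\<in>F. a * f \<in> F \<and> f * a \<in> F) \<and> (\<forall>f\<in>F. star f \<in> F)"

text \<open>An approximate unit for F consisting of projections: a net, given as a family
 e indexed by some index set together with a proper filter G on the index set
 (the tail filter of the directed set).\<close>
definition approx_unit_of_projections ::
  "('a::real_normed_algebra \<Rightarrow> 'a) \<Rightarrow> 'a set \<Rightarrow> ('i \<Rightarrow> 'a) \<Rightarrow> 'i filter \<Rightarrow> bool" where
  "approx_unit_of_projections star F e G \<longleftrightarrow>
     G \<noteq> bot \<and> (\<forall>\<alpha>. is_projection star (e \<alpha>) \<and> e \<alpha> \<in> F) \<and>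
     (\<forall>f\<in>F. ((\<lambda>\<alpha>. norm (f - e \<alpha> * f)) \<longlongrightarrow> 0) G \<and>
             ((\<lambda>\<alpha>. norm (f - f * e \<alpha>)) \<longlongrightarrow> 0) G)"

definition finite_type_elements ::
  "(complex \<Rightarrow> 'a::real_normed_algebra \<Rightarrow> 'a) \<Rightarrow> ('a \<Rightarrow> 'a) \<Rightarrow> 'a set \<Rightarrow> bool" where
  "finite_type_elements scaleC star F \<longleftrightarrow>
     selfadjoint_ideal scaleC star F \<and>
     (\<exists>(e :: 'a set \<Rightarrow> 'a) G. approx_unit_of_projections star F e G) \<and>
     (\<forall>p q. is_projection star p \<and> p \<in> F \<and> is_projection star q \<and> q \<in> F \<longrightarrow>
        (\<exists>v. v * star v = q \<and> star v * v * p = 0))"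

end

theory Submission
  imports Defs
begin

lemma neumann:
  fixes d :: "'a::{real_normed_algebra_1, banach}"
  assumes "norm d < 1"
  shows "\<exists>g. (1 - d) * g = 1 \<and> g * (1 - d) = 1"
proof -
  have s: "summable (\<lambda>n. d ^ n)"
    by (rule summable_comparison_test[where g="\<lambda>n. norm d ^ n"])
       (auto intro: norm_power_ineq summable_geometric simp: assms)
  define g where "g = (\<Sum>n. d ^ n)"
  have h: "(\<Sum>n. d ^ Suc n) = g - 1" using suminf_split_head[OF s] g_def by simp
  have "d * g = g - 1" using suminf_mult[OF s, of d] h g_def by simp
  moreover have "g * d = g - 1" using suminf_mult2[OF s, of d] h g_def
    by (simp add: power_commutes)
  ultimately show ?thesis by (intro exI[of _ g]) (simp add: algebra_simps)
qed

context unital_cstar_algebra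
begin

lemma star_zero: "star 0 = 0"
  using star_add[of 0 0] by simp

lemma star_minus: "star (- x) = - star x"
  using star_add[of x "-x"] star_zero by (metis add.inverse_unique add.right_inverse)

lemma star_diff: "star (x - y) = star x - star y"
  using star_add[of x "-y"] star_minus by simp

lemma star_one: "star 1 = 1"
proof -
  have "star 1 = star 1 * star (star 1)" by (simp add: star_star)
  also have "\<dots> = star (star 1 * 1)" by (rule star_mult[symmetric])
  also have "\<dots> = 1" by (simp add: star_star)
  finally show ?thesis .
qed

lemma norm_star_le: "norm x \<le> norm (star x)"
proof (cases "x = 0")
  case True then show ?thesis by simp
next
  case False
  have "norm x ^ 2 = norm (star x * x)" by (simp add: cstar_identity)
  also have "\<dots> \<le> norm (star x) * norm x" by (rule norm_mult_ineq)
  finally have "norm x * norm x \<le> norm (star x) * norm x" by (simp add: power2_eq_square)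
  then show ?thesis using False by simp
qed

lemma norm_star: "norm (star x) = norm x"
  using norm_star_le[of x] norm_star_le[of "star x"] by (simp add: star_star)

lemma proj_norm: assumes "is_projection star P" shows "norm P \<le> 1"
proof -
  have "norm P ^ 2 = norm (star P * P)" by (simp add: cstar_identity)
  also have "\<dots> = norm P" using assms by (simp add: is_projection_def)
  finally have "norm P * norm P = norm P * 1" by (simp add: power2_eq_square)
  then have "norm P = 0 \<or> norm P = 1" by (metis mult_left_cancel)
  then show ?thesis by auto
qed

lemma construct:
  assumes F: "\<And>a f. f \<in> F \<Longrightarrow> a * f \<in> F \<and> f * a \<in> F"
    and q: "is_projection star q" "q \<in> F"
    and p: "is_projection star p"
    and small: "norm (p - q * p) \<le> 1/16"
  shows "\<exists>P. is_projection star P \<and> P \<in> F \<and> P * p = p \<and>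
     (\<forall>x. norm (P * x - x) \<le> 2 * (norm (q * x - x) + 5 * norm (p - q * p) * norm x))"
proof -
  define \<delta> where "\<delta> = norm (p - q * p)"
  define d where "d = p - q * p"
  have qq: "q * q = q" and qs: "star q = q" using q by (auto simp: is_projection_def)
  have pp: "p * p = p" and ps: "star p = p" using p by (auto simp: is_projection_def)
  have nd: "norm d = \<delta>" by (simp add: d_def \<delta>_def)
  have d0: "0 \<le> \<delta>" by (simp add: \<delta>_def)
  obtain g where g1: "(1 - d) * g = 1" and g2: "g * (1 - d) = 1"
    using neumann[of d] nd small \<delta>_def by auto
  define k where "k = 1 - d"
  have gd: "g = 1 + d * g" using g1 by (simp add: algebra_simps)
  have "norm g \<le> 1 + norm (d * g)" using gd norm_triangle_ineq[of 1 "d*g"] by simp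
  also have "\<dots> \<le> 1 + \<delta> * norm g" using norm_mult_ineq[of d g] nd by simp
  finally have "norm g * (1 - \<delta>) \<le> 1" by (simp add: algebra_simps)
  moreover have "1 - \<delta> \<ge> 1/2" using small \<delta>_def by simp
  moreover have "norm g * (1/2) \<le> norm g * (1 - \<delta>)"
    using calculation(2) by (intro mult_left_mono) auto
  ultimately have ng: "norm g \<le> 2" by linarith
  have ng1: "norm (g - 1) \<le> 2 * \<delta>"
  proof -
    have "norm (g - 1) = norm (d * g)" using gd by (metis add_diff_cancel_left')
    also have "\<dots> \<le> \<delta> * norm g" using norm_mult_ineq[of d g] nd by simp
    also have "\<dots> \<le> \<delta> * 2" using ng d0 by (simp add: mult_left_mono)
    finally show ?thesis by simp
  qed
  have nk: "norm k \<le> 2" unfolding k_def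
    using norm_triangle_ineq4[of 1 d] nd small \<delta>_def by simp
  have nq: "norm q \<le> 1" using proj_norm q by simp
  define r where "r = g * q * k"
  have kg: "k * g = 1" and gk: "g * k = 1" using g1 g2 by (auto simp: k_def)
  have rr: "r * r = r"
  proof -
    have "r * r = g * q * (k * g) * q * k" by (simp add: r_def mult.assoc)
    also have "\<dots> = r" by (simp add: kg qq r_def mult.assoc)
    finally show ?thesis .
  qed
  have dp: "d * p = d" unfolding d_def by (simp add: left_diff_distrib mult.assoc pp)
  have kp: "k * p = q * p" unfolding k_def by (simp add: left_diff_distrib dp) (simp add: d_def)
  have rp: "r * p = p"
  proof -
    have "r * p = g * q * (k * p)" by (simp add: r_def mult.assoc)
    also have "\<dots> = g * (k * p)" by (metis kp qq mult.assoc)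
    also have "\<dots> = p" by (simp add: mult.assoc[symmetric] gk)
    finally show ?thesis .
  qed
  have rF: "r \<in> F" unfolding r_def using F q(2) by blast
  have nrq: "norm (r - q) \<le> 5 * \<delta>"
  proof -
    have e: "r - q = (g - 1) * q * k - q * d"
      by (simp add: r_def k_def algebra_simps)
    have "norm ((g - 1) * q * k) \<le> norm (g - 1) * norm q * norm k"
      by (metis norm_mult_ineq mult_right_mono norm_ge_zero order_trans)
    also have "\<dots> \<le> (2 * \<delta>) * 1 * 2"
      using ng1 nq nk d0 by (intro mult_mono) auto
    finally have a: "norm ((g - 1) * q * k) \<le> 4 * \<delta>" by simp
    have b: "norm (q * d) \<le> \<delta>"
      using norm_mult_ineq[of q d] mult_right_mono[OF nq norm_ge_zero[of d]] nd by simp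
    show ?thesis unfolding e using norm_triangle_ineq4[of "(g - 1) * q * k" "q * d"] a b by simp
  qed
  define s where "s = star r"
  have ss: "s * s = s" unfolding s_def by (metis rr star_mult)
  define a where "a = r - s"
  have na: "norm a \<le> 10 * \<delta>"
  proof -
    have "a = (r - q) - star (r - q)" by (simp add: a_def s_def star_diff qs)
    then have "norm a \<le> norm (r - q) + norm (star (r - q))"
      using norm_triangle_ineq4 by metis
    then show ?thesis using nrq norm_star by simp
  qed
  have sa: "star a = - a" by (simp add: a_def s_def star_diff star_star)
  have naa: "norm (star a * a) < 1"
  proof -
    have "norm (star a * a) = norm a ^ 2" by (rule cstar_identity)
    also have "\<dots> \<le> (10 * \<delta>) ^ 2" using na by (intro power_mono) auto
    also have "\<dots> \<le> (10 / 16) ^ 2" using small d0 \<delta>_def by (intro power_mono) auto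
    also have "\<dots> < 1" by (simp add: power2_eq_square)
    finally show ?thesis .
  qed
  define z where "z = 1 + star a * a"
  obtain w where w1: "z * w = 1" and w2: "w * z = 1"
    using neumann[of "- (star a * a)"] naa unfolding z_def by auto
  have zz: "z = 1 - (r - s) * (r - s)" unfolding z_def sa a_def[symmetric] by simp
  have rr': "\<And>x. r * (r * x) = r * x" using rr by (metis mult.assoc)
  have ss': "\<And>x. s * (s * x) = s * x" using ss by (metis mult.assoc)
  have rz: "r * z = r * s * r" unfolding zz
    by (simp add: algebra_simps rr rr' ss ss')
  have zr: "z * r = r * s * r" unfolding zz
    by (simp add: algebra_simps rr rr' ss ss')
  have sz: "s * z = s * r * s" unfolding zz
    by (simp add: algebra_simps rr rr' ss ss')
  have zs: "z * s = s * r * s" unfolding zz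
    by (simp add: algebra_simps rr rr' ss ss')
  have comm: "\<And>x. z * x = x * z \<Longrightarrow> w * x = x * w"
  proof -
    fix x assume h: "z * x = x * z"
    have "w * x = w * x * (z * w)" by (simp add: w1)
    also have "\<dots> = w * (x * z) * w" by (simp add: mult.assoc)
    also have "\<dots> = w * (z * x) * w" by (simp add: h)
    also have "\<dots> = (w * z) * x * w" by (simp add: mult.assoc)
    finally show "w * x = x * w" by (simp add: w2)
  qed
  have wr: "w * r = r * w" using comm rz zr by simp
  have ws: "w * s = s * w" using comm sz zs by simp
  have zstar: "star z = z" by (simp add: z_def star_add star_one star_mult star_star)
  have sw1: "z * star w = 1" using w2 by (metis star_mult zstar star_one)
  have sw2: "star w * z = 1" using w1 by (metis star_mult zstar star_one)
  have wstar: "star w = w"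
  proof -
    have "star w = star w * (z * w)" by (simp add: w1)
    also have "\<dots> = w" by (simp add: mult.assoc[symmetric] sw2)
    finally show ?thesis .
  qed
  define P where "P = r * s * w"
  have Ps: "star P = P"
  proof -
    have "star P = w * (r * s)" by (simp add: P_def star_mult wstar s_def star_star mult.assoc)
    also have "\<dots> = r * s * w" by (simp add: mult.assoc[symmetric] wr) (simp add: mult.assoc ws)
    finally show ?thesis by (simp add: P_def)
  qed
  have Pr: "P * r = r"
  proof -
    have "P * r = r * s * r * w" by (simp add: P_def mult.assoc wr)
    also have "\<dots> = r * z * w" by (simp add: rz)
    also have "\<dots> = r" by (simp add: mult.assoc w1)
    finally show ?thesis .
  qed
  have PP: "P * P = P"
  proof -
    have "P * P = (P * r) * s * w" by (simp add: P_def mult.assoc)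
    also have "\<dots> = r * s * w" by (simp only: Pr)
    finally show ?thesis by (simp add: P_def)
  qed
  have Pproj: "is_projection star P" by (simp add: is_projection_def PP Ps)
  have PF: "P \<in> F" unfolding P_def using F rF by blast
  have Pp: "P * p = p" by (metis Pr rp mult.assoc)
  have nP: "norm P \<le> 1" using proj_norm Pproj by simp
  have bound: "norm (P * x - x) \<le> 2 * (norm (q * x - x) + 5 * \<delta> * norm x)" for x
  proof -
    have e: "P * x - x = P * (x - r * x) + (r * x - x)"
      by (simp add: algebra_simps mult.assoc[symmetric] Pr)
    have "norm (P * (x - r * x)) \<le> norm (x - r * x)"
      using norm_mult_ineq[of P "x - r*x"] mult_right_mono[OF nP norm_ge_zero[of "x - r*x"]] by simp
    then have "norm (P * x - x) \<le> 2 * norm (r * x - x)"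
      unfolding e using norm_triangle_ineq[of "P * (x - r * x)" "r * x - x"]
      by (simp add: norm_minus_commute)
    moreover have "norm (r * x - x) \<le> norm (q * x - x) + 5 * \<delta> * norm x"
    proof -
      have "r * x - x = (r - q) * x + (q * x - x)" by (simp add: algebra_simps)
      then have "norm (r * x - x) \<le> norm ((r - q) * x) + norm (q * x - x)"
        by (metis norm_triangle_ineq)
      moreover have "norm ((r - q) * x) \<le> 5 * \<delta> * norm x"
        using norm_mult_ineq[of "r - q" x] mult_right_mono[OF nrq norm_ge_zero[of x]] by simp
      ultimately show ?thesis by simp
    qed
    ultimately show ?thesis by simp
  qed
  show ?thesis using Pproj PF Pp bound unfolding \<delta>_def by blast
qed

end

theorem mainTheorem12:
  fixes scaleC :: "complex \<Rightarrow> 'a::{real_normed_algebra_1, banach} \<Rightarrow> 'a"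
    and star :: "'a \<Rightarrow> 'a" and F :: "'a set" and p :: 'a
  assumes "unital_cstar_algebra scaleC star"
    and "finite_type_elements scaleC star F"
    and "is_projection star p" and "p \<in> F"
  shows "\<exists>(e :: 'a set \<Rightarrow> 'a) G. approx_unit_of_projections star F e G \<and>
           (\<forall>\<alpha>. cstar_le star p (e \<alpha>))"
proof -
  interpret C: unital_cstar_algebra scaleC star by fact
  have ideal: "selfadjoint_ideal scaleC star F"
    and ex: "\<exists>(e :: 'a set \<Rightarrow> 'a) G. approx_unit_of_projections star F e G"
    using assms(2) unfolding finite_type_elements_def by auto
  have Fi: "\<And>a f. f \<in> F \<Longrightarrow> a * f \<in> F \<and> f * a \<in> F"
    and Fs: "\<And>f. f \<in> F \<Longrightarrow> star f \<in> F"
    using ideal unfolding selfadjoint_ideal_def by auto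
  obtain e0 :: "'a set \<Rightarrow> 'a" and G where au: "approx_unit_of_projections star F e0 G"
    using ex by blast
  have Gne: "G \<noteq> bot" and e0p: "\<And>\<alpha>. is_projection star (e0 \<alpha>) \<and> e0 \<alpha> \<in> F"
    and e0l: "\<And>f. f \<in> F \<Longrightarrow> ((\<lambda>\<alpha>. norm (f - e0 \<alpha> * f)) \<longlongrightarrow> 0) G"
    using au unfolding approx_unit_of_projections_def by auto
  define good where "good = (\<lambda>\<alpha> P. is_projection star P \<and> P \<in> F \<and> P * p = p \<and>
     (\<forall>x. norm (P * x - x) \<le> 2 * (norm (e0 \<alpha> * x - x) + 5 * norm (p - e0 \<alpha> * p) * norm x)))"
  define e where "e = (\<lambda>\<alpha>. if \<exists>P. good \<alpha> P then (SOME P. good \<alpha> P) else p)"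
  have pp: "p * p = p" and ps: "star p = p" using assms(3) by (auto simp: is_projection_def)
  have eprop: "is_projection star (e \<alpha>) \<and> e \<alpha> \<in> F \<and> e \<alpha> * p = p" for \<alpha>
  proof (cases "\<exists>P. good \<alpha> P")
    case True
    then have "good \<alpha> (e \<alpha>)" unfolding e_def if_P[OF True] by (rule someI_ex)
    then show ?thesis unfolding good_def by auto
  next
    case False
    then have "e \<alpha> = p" unfolding e_def by (rule if_not_P)
    then show ?thesis using assms(3,4) pp by simp
  qed
  have pl: "((\<lambda>\<alpha>. norm (p - e0 \<alpha> * p)) \<longlongrightarrow> 0) G" using e0l assms(4) by simp
  have ev: "\<forall>\<^sub>F \<alpha> in G. norm (p - e0 \<alpha> * p) < 1/16"
    using order_tendstoD(2)[OF pl, of "1/16"] by simp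
  have evgood: "\<forall>\<^sub>F \<alpha> in G. good \<alpha> (e \<alpha>)"
  proof (rule eventually_mono[OF ev])
    fix \<alpha> assume "norm (p - e0 \<alpha> * p) < 1/16"
    then have ex: "\<exists>P. good \<alpha> P" unfolding good_def
      using C.construct[of F "e0 \<alpha>" p] Fi e0p assms(3) by auto
    show "good \<alpha> (e \<alpha>)" unfolding e_def if_P[OF ex] by (rule someI_ex[OF ex])
  qed
  have left: "((\<lambda>\<alpha>. norm (f - e \<alpha> * f)) \<longlongrightarrow> 0) G" if f: "f \<in> F" for f
  proof (rule Lim_null_comparison)
    show "\<forall>\<^sub>F \<alpha> in G. norm (norm (f - e \<alpha> * f)) \<le>
        2 * (norm (f - e0 \<alpha> * f) + 5 * norm (p - e0 \<alpha> * p) * norm f)"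
    proof (rule eventually_mono[OF evgood])
      fix \<alpha> assume "good \<alpha> (e \<alpha>)"
      then have "norm (e \<alpha> * f - f) \<le> 2 * (norm (e0 \<alpha> * f - f) + 5 * norm (p - e0 \<alpha> * p) * norm f)"
        unfolding good_def by blast
      then show "norm (norm (f - e \<alpha> * f)) \<le>
        2 * (norm (f - e0 \<alpha> * f) + 5 * norm (p - e0 \<alpha> * p) * norm f)"
        by (simp add: norm_minus_commute)
    qed
    have "((\<lambda>\<alpha>. 2 * (norm (f - e0 \<alpha> * f) + 5 * norm (p - e0 \<alpha> * p) * norm f)) \<longlongrightarrow>
            2 * (0 + 5 * 0 * norm f)) G"
      by (intro tendsto_intros e0l[OF f] pl)
    then show "((\<lambda>\<alpha>. 2 * (norm (f - e0 \<alpha> * f) + 5 * norm (p - e0 \<alpha> * p) * norm f)) \<longlongrightarrow> 0) G"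
      by simp
  qed
  have right: "((\<lambda>\<alpha>. norm (f - f * e \<alpha>)) \<longlongrightarrow> 0) G" if f: "f \<in> F" for f
  proof -
    have "norm (f - f * e \<alpha>) = norm (star f - e \<alpha> * star f)" for \<alpha>
    proof -
      have "star (f - f * e \<alpha>) = star f - e \<alpha> * star f"
        using eprop[of \<alpha>] by (simp add: C.star_diff C.star_mult is_projection_def)
      then show ?thesis by (metis C.norm_star)
    qed
    then show ?thesis using left[OF Fs[OF f]] by simp
  qed
  have le: "cstar_le star p (e \<alpha>)" for \<alpha>
  proof -
    have ee: "e \<alpha> * e \<alpha> = e \<alpha>" and es: "star (e \<alpha>) = e \<alpha>" and ep: "e \<alpha> * p = p"
      using eprop[of \<alpha>] by (auto simp: is_projection_def)
    have pe: "p * e \<alpha> = p" using ep by (metis C.star_mult es ps)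
    have "star (e \<alpha> - p) * (e \<alpha> - p) = e \<alpha> - p"
      by (simp add: C.star_diff es ps algebra_simps ee ep pe pp)
    then show ?thesis unfolding cstar_le_def by metis
  qed
  show ?thesis
    by (intro exI[of _ e] exI[of _ G] conjI allI le)
       (auto simp: approx_unit_of_projections_def Gne eprop left right)
qed

end
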